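(* Let $K>0$, $x_0<\alpha$ be real constants, and let $f$ be a continuous function on $[x_0,\alpha)$ with $f(x)>0$ on $[x_0,\alpha)$ such that either $f$ is decreasing on $[x_0,\alpha)$ or $\lim_{x\to\alpha-0}f(x)=0$. Then for every $w_0>0$ there exists a unique global positive solution $w$ on $[x_0,\alpha)$ of the initial value problem \[ w'+K=\frac{f(x)}{w},\quad x_0<x<\alpha,\qquad w(x_0)=w_0 \] (equivalently, of $(w'+K)w=f(x)$, $x_0<x<\alpha$, $w(x_0)=w_0$). *)

theory Defs
  imports Complex_Main
begin

definition global_pos_solution ::
  "real \<Rightarrow> (real \<Rightarrow> real) \<Rightarrow> real \<Rightarrow> real \<Rightarrow> real \<Rightarrow> (real \<Rightarrow> real) \<Rightarrow> bool" where
  "global_pos_solution K f x0 \<alpha> w0 w \<longleftrightarrow>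
     continuous_on {x0..<\<alpha>} w \<and>
     (\<forall>x\<in>{x0..<\<alpha>}. w x > 0) \<and>
     w x0 = w0 \<and>
     (\<forall>x\<in>{x0<..<\<alpha>}. (w has_real_derivative (f x / w x - K)) (at x))"

end

theory Submission
  imports Defs "HOL-Analysis.Analysis"
begin

lemma pos_min_on:
  fixes v :: "real \<Rightarrow> real"
  assumes "a \<le> c" "continuous_on {a..c} v" "\<forall>x\<in>{a..c}. v x > 0"
  shows "\<exists>d>0. \<forall>x\<in>{a..c}. d \<le> v x"
proof -
  obtain x where "x \<in> {a..c}" "\<forall>y\<in>{a..c}. v x \<le> v y"
    using continuous_attains_inf[of "{a..c}" v] assms by auto
  then show ?thesis using assms(3) by blast
qed

lemma bound_on:
  fixes f :: "real \<Rightarrow> real"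
  assumes "continuous_on {a..c} f"
  shows "\<exists>M>0. \<forall>x\<in>{a..c}. \<bar>f x\<bar> \<le> M"
proof -
  have "bounded (f ` {a..c})" using compact_continuous_image[OF assms] compact_imp_bounded by auto
  then obtain M where "\<forall>x\<in>{a..c}. \<bar>f x\<bar> \<le> M" unfolding bounded_iff by auto
  then show ?thesis by (intro exI[of _ "max M 1"]) force
qed

lemma uniq_interval:
  fixes f v w :: "real \<Rightarrow> real" and K a c :: real
  assumes "a \<le> c" "continuous_on {a..c} f" "continuous_on {a..c} v" "continuous_on {a..c} w"
    "\<forall>x\<in>{a..c}. v x > 0" "\<forall>x\<in>{a..c}. w x > 0" "v a = w a"
    "\<forall>x\<in>{a<..<c}. (v has_real_derivative (f x / v x - K)) (at x)"
    "\<forall>x\<in>{a<..<c}. (w has_real_derivative (f x / w x - K)) (at x)"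
  shows "\<forall>x\<in>{a..c}. v x = w x"
proof
  fix x assume x: "x \<in> {a..c}"
  obtain dv where dv: "dv > 0" "\<forall>x\<in>{a..c}. dv \<le> v x" using pos_min_on assms by metis
  obtain dw where dw: "dw > 0" "\<forall>x\<in>{a..c}. dw \<le> w x" using pos_min_on assms by metis
  obtain M where M: "M > 0" "\<forall>x\<in>{a..c}. \<bar>f x\<bar> \<le> M" using bound_on assms(2) by metis
  define L where "L = M / (dv * dw)"
  have L0: "L \<ge> 0" using M dv dw by (simp add: L_def)
  define e where "e = (\<lambda>t. (v t - w t)^2 * exp (-2*L*t))"
  have lip: "\<bar>(f t / v t - K) - (f t / w t - K)\<bar> \<le> L * \<bar>v t - w t\<bar>" if t: "t \<in> {a..c}" for t
  proof -
    have vt: "v t \<ge> dv" "w t \<ge> dw" using dv dw t by auto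
    have "(f t / v t - K) - (f t / w t - K) = f t * (w t - v t) / (v t * w t)"
      using vt dv dw by (simp add: field_simps)
    also have "\<bar>\<dots>\<bar> = \<bar>f t\<bar> * \<bar>v t - w t\<bar> / (v t * w t)"
      using vt dv dw by (simp add: abs_mult abs_minus_commute)
    also have "\<dots> \<le> M * \<bar>v t - w t\<bar> / (dv * dw)"
    proof (rule frac_le)
      show "0 \<le> M * \<bar>v t - w t\<bar>" using M by simp
      show "\<bar>f t\<bar> * \<bar>v t - w t\<bar> \<le> M * \<bar>v t - w t\<bar>" using M t by (intro mult_right_mono) auto
      show "0 < dv * dw" using dv dw by simp
      show "dv * dw \<le> v t * w t" using vt dv dw by (intro mult_mono) auto
    qed
    finally show ?thesis by (simp add: L_def)
  qed
  have "e x \<le> e a"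
  proof (rule DERIV_nonpos_imp_decreasing_open[of a x e])
    show "a \<le> x" using x by auto
    have sub: "{a..x} \<subseteq> {a..c}" using x by auto
    show "continuous_on {a..x} e" unfolding e_def
      by (intro continuous_intros continuous_on_subset[OF assms(3) sub] continuous_on_subset[OF assms(4) sub])
    fix t assume t: "a < t" "t < x"
    have tin: "t \<in> {a<..<c}" using t x by auto
    let ?d = "2 * (v t - w t) * ((f t / v t - K) - (f t / w t - K)) * exp (-2*L*t) + (v t - w t)^2 * (exp (-2*L*t) * (-2*L))"
    have "(e has_real_derivative ?d) (at t)"
      unfolding e_def using assms(8) assms(9) tin
      by (auto intro!: derivative_eq_intros)
    moreover have "?d \<le> 0"
    proof -
      have D: "\<bar>(f t / v t - K) - (f t / w t - K)\<bar> \<le> L * \<bar>v t - w t\<bar>" using lip[of t] tin by auto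
      have "(v t - w t) * ((f t / v t - K) - (f t / w t - K)) \<le> \<bar>(v t - w t) * ((f t / v t - K) - (f t / w t - K))\<bar>"
        by (rule abs_ge_self)
      also have "\<dots> = \<bar>v t - w t\<bar> * \<bar>(f t / v t - K) - (f t / w t - K)\<bar>" by (rule abs_mult)
      also have "\<dots> \<le> \<bar>v t - w t\<bar> * (L * \<bar>v t - w t\<bar>)" by (rule mult_left_mono[OF D abs_ge_zero])
      also have "\<dots> = L * (v t - w t)^2" by (simp add: power2_eq_square algebra_simps)
      finally have "2 * (v t - w t) * ((f t / v t - K) - (f t / w t - K)) \<le> 2 * L * (v t - w t)^2" by (simp only: mult.assoc)
      then have "2 * (v t - w t) * ((f t / v t - K) - (f t / w t - K)) * exp (-2*L*t) \<le> 2 * L * (v t - w t)^2 * exp (-2*L*t)"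
        by (intro mult_right_mono) auto
      then show ?thesis by (simp add: algebra_simps)
    qed
    ultimately show "\<exists>y. (e has_real_derivative y) (at t) \<and> y \<le> 0" by blast
  qed
  moreover have "e a = 0" using assms(7) by (simp add: e_def)
  moreover have "e x \<ge> 0" by (simp add: e_def)
  ultimately have "(v x - w x)^2 * exp (-2*L*x) \<le> 0" by (simp add: e_def)
  then have "(v x - w x)^2 \<le> 0" by (simp add: mult_le_0_iff)
  then show "v x = w x" by simp
qed


lemma exp_integral:
  fixes lam a y :: real
  assumes "lam > 0" "a \<le> y"
  shows "integral {a..y} (\<lambda>t. exp (lam * (t - a))) = (exp (lam * (y - a)) - 1) / lam"
proof -
  have "((\<lambda>t. exp (lam * (t - a))) has_integral ((\<lambda>t. exp (lam * (t - a)) / lam) y - (\<lambda>t. exp (lam * (t - a)) / lam) a)) {a..y}"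
  proof (rule fundamental_theorem_of_calculus[OF assms(2)])
    fix x assume "x \<in> {a..y}"
    have "((\<lambda>t. exp (lam * (t - a)) / lam) has_real_derivative (exp (lam * (x - a)) * (lam * 1) / lam)) (at x within {a..y})"
      by (auto intro!: derivative_eq_intros)
    then show "((\<lambda>t. exp (lam * (t - a)) / lam) has_vector_derivative exp (lam * (x - a))) (at x within {a..y})"
      using assms(1) by (simp add: has_real_derivative_iff_has_vector_derivative)
  qed
  then show ?thesis using assms by (simp add: integral_unique diff_divide_distrib)
qed

lemma picard_fix:
  fixes G :: "real \<Rightarrow> real \<Rightarrow> real" and a b w0 L :: real
  assumes ab: "a \<le> b" and L: "L > 0"
    and Gc: "\<And>u. continuous_on {a..b} u \<Longrightarrow> continuous_on {a..b} (\<lambda>t. G t (u t))"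
    and Gl: "\<And>t y z. t \<in> {a..b} \<Longrightarrow> \<bar>G t y - G t z\<bar> \<le> L * \<bar>y - z\<bar>"
  shows "\<exists>u. continuous_on {a..b} u \<and> (\<forall>x\<in>{a..b}. u x = w0 + integral {a..x} (\<lambda>t. G t (u t)))"
proof -
  define lam where "lam = 2 * L"
  have lam: "lam > 0" using L by (simp add: lam_def)
  define E where "E = (\<lambda>x. exp (lam * (x - a)))"
  define c where "c = (\<lambda>x::real. max a (min b x))"
  have cin: "c x \<in> {a..b}" for x using ab by (auto simp: c_def)
  have cid: "x \<in> {a..b} \<Longrightarrow> c x = x" for x by (auto simp: c_def)
  have cc: "continuous_on UNIV c" unfolding c_def by (intro continuous_intros)
  have Ec: "continuous_on S E" for S unfolding E_def by (intro continuous_intros)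
  have Epos: "E x > 0" for x by (simp add: E_def)
  define g where "g = (\<lambda>(\<phi>::real \<Rightarrow>\<^sub>C real) x. (w0 + integral {a..x} (\<lambda>t. G t (E t * \<phi> t))) / E x)"
  have intg: "(\<lambda>t. G t (E t * \<phi> t)) integrable_on {a..y}" if "y \<in> {a..b}" for \<phi> :: "real \<Rightarrow>\<^sub>C real" and y
  proof -
    have "continuous_on {a..b} (\<lambda>t. G t (E t * \<phi> t))"
      by (intro Gc continuous_intros Ec continuous_on_apply_bcontfun)
    then have "continuous_on {a..y} (\<lambda>t. G t (E t * \<phi> t))" by (rule continuous_on_subset) (use that in auto)
    then show ?thesis by (rule integrable_continuous_real)
  qed
  have gc: "continuous_on {a..b} (g \<phi>)" for \<phi>
  proof -
    have "continuous_on {a..b} (\<lambda>x. integral {a..x} (\<lambda>t. G t (E t * \<phi> t)))"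
      by (rule indefinite_integral_continuous_1, rule intg) (use ab in auto)
    then show ?thesis unfolding g_def using Epos
      by (auto intro!: continuous_intros Ec) (metis less_irrefl)
  qed
  have gb: "(\<lambda>x. g \<phi> (c x)) \<in> bcontfun" for \<phi>
  proof -
    have "continuous_on UNIV (\<lambda>x. g \<phi> (c x))"
      by (rule continuous_on_compose2[OF gc[of \<phi>] cc]) (use cin in auto)
    moreover have "bounded (range (\<lambda>x. g \<phi> (c x)))"
    proof -
      have "compact (g \<phi> ` {a..b})" by (rule compact_continuous_image[OF gc]) simp
      then have "bounded (g \<phi> ` {a..b})" by (rule compact_imp_bounded)
      moreover have "range (\<lambda>x. g \<phi> (c x)) \<subseteq> g \<phi> ` {a..b}" using cin by auto
      ultimately show ?thesis by (rule bounded_subset)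
    qed
    ultimately show ?thesis by (simp add: bcontfun_def)
  qed
  define T where "T = (\<lambda>\<phi>. Bcontfun (\<lambda>x. g \<phi> (c x)))"
  have Tapp: "apply_bcontfun (T \<phi>) x = g \<phi> (c x)" for \<phi> x
    unfolding T_def using gb[of \<phi>] by (simp add: Bcontfun_inverse)
  have contr: "dist (T \<phi>) (T \<psi>) \<le> 1/2 * dist \<phi> \<psi>" for \<phi> \<psi>
  proof (rule dist_bound)
    fix x
    define y where "y = c x"
    have y: "y \<in> {a..b}" using cin by (simp add: y_def)
    define D where "D = dist \<phi> \<psi>"
    have "dist (T \<phi> x) (T \<psi> x) = \<bar>g \<phi> y - g \<psi> y\<bar>" by (simp add: Tapp y_def dist_real_def)
    also have "g \<phi> y - g \<psi> y = integral {a..y} (\<lambda>t. G t (E t * \<phi> t) - G t (E t * \<psi> t)) / E y"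
      unfolding g_def using intg[OF y, of \<phi>] intg[OF y, of \<psi>]
      by (simp add: integral_diff diff_divide_distrib add_divide_distrib)
    also have "\<bar>\<dots>\<bar> = \<bar>integral {a..y} (\<lambda>t. G t (E t * \<phi> t) - G t (E t * \<psi> t))\<bar> / E y"
      using Epos[of y] by simp
    also have "\<bar>integral {a..y} (\<lambda>t. G t (E t * \<phi> t) - G t (E t * \<psi> t))\<bar> \<le> integral {a..y} (\<lambda>t. L * D * E t)"
    proof -
      have "norm (integral {a..y} (\<lambda>t. G t (E t * \<phi> t) - G t (E t * \<psi> t))) \<le> integral {a..y} (\<lambda>t. L * D * E t)"
      proof (rule integral_norm_bound_integral)
        show "(\<lambda>t. G t (E t * \<phi> t) - G t (E t * \<psi> t)) integrable_on {a..y}"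
          using intg[OF y, of \<phi>] intg[OF y, of \<psi>] by (rule integrable_diff)
        show "(\<lambda>t. L * D * E t) integrable_on {a..y}"
          by (intro integrable_continuous_real continuous_intros Ec)
        fix t assume t: "t \<in> {a..y}"
        then have tab: "t \<in> {a..b}" using y by auto
        have "norm (G t (E t * \<phi> t) - G t (E t * \<psi> t)) \<le> L * \<bar>E t * \<phi> t - E t * \<psi> t\<bar>"
          using Gl[OF tab] by simp
        also have "\<bar>E t * \<phi> t - E t * \<psi> t\<bar> = E t * \<bar>\<phi> t - \<psi> t\<bar>"
          using Epos[of t] by (simp add: right_diff_distrib[symmetric] abs_mult)
        also have "\<bar>\<phi> t - \<psi> t\<bar> \<le> D" unfolding D_def using dist_bounded[of \<phi> t \<psi>] by (simp add: dist_real_def)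
        finally show "norm (G t (E t * \<phi> t) - G t (E t * \<psi> t)) \<le> L * D * E t"
          using L Epos[of t] by (simp add: mult_left_mono mult_ac)
      qed
      then show ?thesis by simp
    qed
    also have "integral {a..y} (\<lambda>t. L * D * E t) = L * D * ((E y - 1) / lam)"
      unfolding E_def using exp_integral[OF lam, of a y] y by simp
    finally have "dist (T \<phi> x) (T \<psi> x) \<le> L * D * ((E y - 1) / lam) / E y"
      using Epos[of y] by (simp add: divide_right_mono)
    also have "\<dots> \<le> L * D * (E y / lam) / E y"
      using L Epos[of y] lam by (intro divide_right_mono mult_left_mono) (auto simp: D_def)
    also have "\<dots> = 1/2 * D" using Epos[of y] L by (simp add: lam_def)
    finally show "dist (T \<phi> x) (T \<psi> x) \<le> 1/2 * dist \<phi> \<psi>" by (simp add: D_def)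
  qed
  obtain \<phi> where fxp: "T \<phi> = \<phi>" using banach_fix_type[of "1/2" T] contr by auto
  define u where "u = (\<lambda>x. E x * \<phi> x)"
  have "continuous_on {a..b} u" unfolding u_def by (intro continuous_intros Ec continuous_on_apply_bcontfun)
  moreover have "u x = w0 + integral {a..x} (\<lambda>t. G t (u t))" if x: "x \<in> {a..b}" for x
  proof -
    have "\<phi> x = g \<phi> x" using Tapp[of \<phi> x] fxp cid[OF x] by simp
    then show ?thesis using Epos[of x] unfolding u_def g_def by (simp add: field_simps)
  qed
  ultimately show ?thesis by blast
qed


lemma exist_interval:
  fixes f :: "real \<Rightarrow> real" and K a b w0 :: real
  assumes K: "K > 0" and ab: "a < b" and fc: "continuous_on {a..b} f"
    and fp: "\<forall>x\<in>{a..b}. f x > 0" and w0: "w0 > 0"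
  shows "\<exists>u. continuous_on {a..b} u \<and> (\<forall>x\<in>{a..b}. u x > 0) \<and> u a = w0 \<and>
             (\<forall>x\<in>{a<..<b}. (u has_real_derivative (f x / u x - K)) (at x))"
proof -
  obtain m where m: "m > 0" "\<forall>x\<in>{a..b}. m \<le> f x" using pos_min_on[of a b f] ab fc fp by auto
  obtain M where M: "M > 0" "\<forall>x\<in>{a..b}. \<bar>f x\<bar> \<le> M" using bound_on[OF fc] by auto
  define \<delta> where "\<delta> = min w0 (m / K)"
  have d0: "\<delta> > 0" using w0 m K by (simp add: \<delta>_def)
  have dmK: "\<delta> \<le> m / K" by (simp add: \<delta>_def)
  define G where "G = (\<lambda>t y. f t / max y \<delta> - K)"
  define L where "L = M / (\<delta> * \<delta>)"
  have L0: "L > 0" using M d0 by (simp add: L_def)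
  have Gc: "continuous_on {a..b} (\<lambda>t. G t (u t))" if "continuous_on {a..b} u" for u
    unfolding G_def using that fc d0 by (auto intro!: continuous_intros)
  have Gl: "\<bar>G t y - G t z\<bar> \<le> L * \<bar>y - z\<bar>" if t: "t \<in> {a..b}" for t y z
  proof -
    have my: "max y \<delta> \<ge> \<delta>" "max z \<delta> \<ge> \<delta>" by auto
    have "G t y - G t z = f t * (max z \<delta> - max y \<delta>) / (max y \<delta> * max z \<delta>)"
      unfolding G_def using my d0 by (simp add: field_simps)
    also have "\<bar>\<dots>\<bar> = \<bar>f t\<bar> * \<bar>max z \<delta> - max y \<delta>\<bar> / (max y \<delta> * max z \<delta>)"
      using my d0 by (simp add: abs_mult)
    also have "\<dots> \<le> M * \<bar>y - z\<bar> / (\<delta> * \<delta>)"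
    proof (rule frac_le)
      show "0 \<le> M * \<bar>y - z\<bar>" using M by simp
      have "\<bar>max z \<delta> - max y \<delta>\<bar> \<le> \<bar>y - z\<bar>" by (auto simp: max_def abs_if)
      then show "\<bar>f t\<bar> * \<bar>max z \<delta> - max y \<delta>\<bar> \<le> M * \<bar>y - z\<bar>" using M t
        by (intro mult_mono) auto
      show "0 < \<delta> * \<delta>" using d0 by simp
      show "\<delta> * \<delta> \<le> max y \<delta> * max z \<delta>" using my d0 by (intro mult_mono) auto
    qed
    finally show ?thesis by (simp add: L_def)
  qed
  obtain u where uc: "continuous_on {a..b} u"
    and ueq: "\<forall>x\<in>{a..b}. u x = w0 + integral {a..x} (\<lambda>t. G t (u t))"
    using picard_fix[of a b L G w0] ab L0 Gc Gl by auto
  have ua: "u a = w0" using ueq ab by auto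
  have du: "(u has_real_derivative G x (u x)) (at x)" if x: "x \<in> {a<..<b}" for x
  proof -
    have "((\<lambda>x. integral {a..x} (\<lambda>t. G t (u t))) has_real_derivative G x (u x)) (at x within {a..b})"
      using integral_has_real_derivative[OF Gc[OF uc], of x] x by auto
    then have "((\<lambda>x. w0 + integral {a..x} (\<lambda>t. G t (u t))) has_real_derivative G x (u x)) (at x)"
      using at_within_Icc_at[of a x b] x by (auto intro!: derivative_eq_intros)
    then show ?thesis
      by (rule has_field_derivative_transform_within_open[of _ _ _ "{a<..<b}"]) (use x ueq in auto)
  qed
  have lb: "\<delta> \<le> u x" if x: "x \<in> {a..b}" for x
  proof (rule ccontr)
    assume ux: "\<not> \<delta> \<le> u x"
    define S where "S = {t \<in> {a..x}. \<delta> \<le> u t}"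
    have ucx: "continuous_on {a..x} u" by (rule continuous_on_subset[OF uc]) (use x in auto)
    have "closed S" unfolding S_def
      by (rule continuous_on_closed_Collect_le[OF continuous_on_const ucx]) simp
    moreover have "bounded S" unfolding S_def by (rule bounded_subset[of "{a..x}"]) auto
    ultimately have cS: "compact S" by (simp add: compact_eq_bounded_closed)
    have "a \<in> S" unfolding S_def using x ua by (auto simp: \<delta>_def)
    then obtain s where s: "s \<in> S" "\<forall>y\<in>S. y \<le> s" using compact_attains_sup[OF cS] by blast
    have sx: "s \<le> x" "a \<le> s" "\<delta> \<le> u s" using s by (auto simp: S_def)
    have "u s \<le> u x"
    proof (rule DERIV_nonneg_imp_increasing_open[of s x u])
      show "s \<le> x" by fact
      show "continuous_on {s..x} u" by (rule continuous_on_subset[OF uc]) (use x sx in auto)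
      fix t assume t: "s < t" "t < x"
      have tab: "t \<in> {a<..<b}" using t x sx by auto
      have "u t < \<delta>"
      proof (rule ccontr)
        assume "\<not> u t < \<delta>"
        then have "t \<in> S" using t sx by (auto simp: S_def)
        then show False using s t by auto
      qed
      then have "G t (u t) = f t / \<delta> - K" by (simp add: G_def)
      moreover have "f t / \<delta> \<ge> K"
      proof -
        have "m \<le> f t" using m tab by auto
        have "K * \<delta> \<le> m" using dmK K by (simp add: field_simps)
        then show ?thesis using \<open>m \<le> f t\<close> d0 by (simp add: field_simps)
      qed
      ultimately show "\<exists>y. (u has_real_derivative y) (at t) \<and> 0 \<le> y" using du[OF tab] by auto
    qed
    then show False using ux sx by auto
  qed
  have "\<forall>x\<in>{a<..<b}. (u has_real_derivative (f x / u x - K)) (at x)"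
  proof
    fix x assume x: "x \<in> {a<..<b}"
    have "max (u x) \<delta> = u x" using lb[of x] x by auto
    then show "(u has_real_derivative (f x / u x - K)) (at x)" using du[OF x] by (simp add: G_def)
  qed
  moreover have "\<forall>x\<in>{a..b}. u x > 0" using lb d0 by (meson less_le_trans)
  ultimately show ?thesis using uc ua by blast
qed


theorem theorem3:
  fixes K x0 \<alpha> :: real and f :: "real \<Rightarrow> real"
  assumes "K > 0" and "x0 < \<alpha>"
    and "continuous_on {x0..<\<alpha>} f"
    and "\<forall>x\<in>{x0..<\<alpha>}. f x > 0"
    and "antimono_on {x0..<\<alpha>} f \<or> (f \<longlongrightarrow> 0) (at_left \<alpha>)"
  shows "\<forall>w0>0. \<exists>w. global_pos_solution K f x0 \<alpha> w0 w \<and>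
           (\<forall>v. global_pos_solution K f x0 \<alpha> w0 v \<longrightarrow> (\<forall>x\<in>{x0..<\<alpha>}. v x = w x))"
proof (intro allI impI)
  fix w0 :: real assume w0: "w0 > 0"
  note K = assms(1) and fc = assms(3) and fp = assms(4)
  define P where "P = (\<lambda>b u. continuous_on {x0..b} u \<and> (\<forall>x\<in>{x0..b}. u x > 0) \<and> u x0 = w0 \<and>
             (\<forall>x\<in>{x0<..<b}. (u has_real_derivative (f x / u x - K)) (at x)))"
  define sol where "sol = (\<lambda>b. SOME u. P b u)"
  have solP: "P b (sol b)" if b: "x0 < b" "b < \<alpha>" for b
  proof -
    have "\<exists>u. P b u" unfolding P_def
      by (rule exist_interval[OF K b(1) continuous_on_subset[OF fc] _ w0]) (use b fp in auto)
    then show ?thesis unfolding sol_def by (rule someI_ex)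
  qed
  have agree: "sol b y = sol b' y" if b: "x0 < b" "b < \<alpha>" "x0 < b'" "b' < \<alpha>" "y \<in> {x0..min b b'}" for b b' y
  proof -
    have Pb: "P b (sol b)" "P b' (sol b')" using solP b by auto
    have "\<forall>x\<in>{x0..min b b'}. sol b x = sol b' x"
      by (rule uniq_interval[of x0 "min b b'" f "sol b" "sol b'" K])
         (use b Pb in \<open>auto simp: P_def intro: continuous_on_subset[OF fc] elim: continuous_on_subset\<close>)
    then show ?thesis using b by auto
  qed
  define bb where "bb = (\<lambda>y. (y + \<alpha>) / 2)"
  define w where "w = (\<lambda>y. sol (bb y) y)"
  have bbr: "x0 < bb y" "bb y < \<alpha>" "y < bb y" if "y \<in> {x0..<\<alpha>}" for y
    using that by (auto simp: bb_def)
  have wc: "\<forall>y\<in>{x0..c}. w y = sol c y" if c: "x0 < c" "c < \<alpha>" for c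
  proof
    fix y assume y: "y \<in> {x0..c}"
    have "y \<in> {x0..<\<alpha>}" using y c by auto
    then show "w y = sol c y" unfolding w_def using agree[of "bb y" c y] bbr[of y] c y by auto
  qed
  have gw: "global_pos_solution K f x0 \<alpha> w0 w"
    unfolding global_pos_solution_def
  proof (intro conjI ballI)
    show "continuous_on {x0..<\<alpha>} w"
      unfolding continuous_on_eq_continuous_within
    proof
      fix x assume x: "x \<in> {x0..<\<alpha>}"
      define c where "c = bb x"
      have c: "x0 < c" "c < \<alpha>" "x < c" using bbr[OF x] by (auto simp: c_def)
      have "continuous_on {x0..c} w"
        using solP[OF c(1,2)] wc[OF c(1,2)] by (auto simp: P_def intro: continuous_on_cong[THEN iffD1])
      then have "continuous (at x within {x0..c}) w" using x c by (auto simp: continuous_on_eq_continuous_within)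
      moreover have "at x within {x0..<\<alpha>} = at x within {x0..c}"
        by (rule at_within_nhd[of x "{..<c}"]) (use c x in auto)
      ultimately show "continuous (at x within {x0..<\<alpha>}) w" by simp
    qed
  next
    fix x assume x: "x \<in> {x0..<\<alpha>}"
    show "w x > 0" using solP[OF bbr(1,2)[OF x]] bbr(3)[OF x] x unfolding w_def P_def by auto
  next
    show "w x0 = w0" using solP[OF bbr(1,2)[of x0]] assms(2) unfolding w_def P_def by auto
  next
    fix x assume x: "x \<in> {x0<..<\<alpha>}"
    define c where "c = bb x"
    have xx: "x \<in> {x0..<\<alpha>}" using x by auto
    have c: "x0 < c" "c < \<alpha>" "x < c" using bbr[OF xx] by (auto simp: c_def)
    have d: "(sol c has_real_derivative (f x / sol c x - K)) (at x)"
      using solP[OF c(1,2)] x c unfolding P_def by auto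
    have wx: "w x = sol c x" using wc[OF c(1,2)] x c by auto
    have "(w has_real_derivative (f x / sol c x - K)) (at x)"
      by (rule has_field_derivative_transform_within_open[OF d, of "{x0<..<c}"]) (use x c wc[OF c(1,2)] in auto)
    then show "(w has_real_derivative (f x / w x - K)) (at x)" using wx by simp
  qed
  moreover have "\<forall>x\<in>{x0..<\<alpha>}. v x = w x" if v: "global_pos_solution K f x0 \<alpha> w0 v" for v
  proof
    fix x assume x: "x \<in> {x0..<\<alpha>}"
    have sub: "{x0..x} \<subseteq> {x0..<\<alpha>}" using x by auto
    have sub2: "{x0<..<x} \<subseteq> {x0<..<\<alpha>}" using x by auto
    have "\<forall>y\<in>{x0..x}. v y = w y"
      by (rule uniq_interval[of x0 x f v w K])
         (use x v gw sub sub2 in \<open>auto simp: global_pos_solution_def intro: continuous_on_subset[OF fc sub] elim: continuous_on_subset\<close>)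
    then show "v x = w x" using x by auto
  qed
  ultimately show "\<exists>w. global_pos_solution K f x0 \<alpha> w0 w \<and>
           (\<forall>v. global_pos_solution K f x0 \<alpha> w0 v \<longrightarrow> (\<forall>x\<in>{x0..<\<alpha>}. v x = w x))" by blast
qed

end
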